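(* For all $g,g'\in\mathbb R$ and all $p,q\in\Delta_d^{\mathcal S}$, \[ \ell^\Theta_{\mathrm C,\infty}\bigl(\mathcal G_g(p),\mathcal G_{g'}(q)\bigr)\le\ell^\Theta_{\mathrm C,\infty}(p,q)+\Delta^{-1/2}|g-g'|. \]
   Context: Finite state set $\mathcal S=\{1,\dots,m\}$ with a transition matrix $P=(P_{ij})$ (induced by a fixed policy in a finite MDP). $R_{ij}$ is the finite-valued $[0,1]$-valued random one-step reward conditioned on transition $i\to j$; $\nu^{(g)}_{ij}:=\mathrm{Law}(R_{ij}-g)$. $\Theta=\{\theta_1<\dots<\theta_d\}$ with constant stride $\Delta>0$; $\Delta_d$ the probability simplex of $\mathbb R^d$; $\Delta_d^{\mathcal S}$ families $(p_i)_{i\in\mathcal S}$, $p_i\in\Delta_d$. For $u\in\Delta_d$, $\eta^{u,0}:=\sum_ku_k\delta_{\theta_k}$. Categorical projection $\Pi^\Theta_{\mathrm C}$: $\delta_x\mapsto\delta_{\theta_1}$ if $x\le\theta_1$, $\delta_{\theta_d}$ if $x\ge\theta_d$, $\frac{\theta_{k+1}-x}{\Delta}\delta_{\theta_k}+\frac{x-\theta_k}{\Delta}\delta_{\theta_{k+1}}$ if $\theta_k\le x\le\theta_{k+1}$, extended linearly to laws. $\mathcal G_g(p)$ is the unique $q\in\Delta_d^{\mathcal S}$ with $\eta^{q_i,0}=\Pi^\Theta_{\mathrm C}(\sum_jP_{ij}(\nu^{(g)}_{ij}\ast\eta^{p_j,0}))$ for all $i$. Coordinate Cramér metric: $F_u(\theta_k):=\sum_{j\le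 k}u_j$, $\ell^\Theta_{\mathrm C}(u,v)^2:=\Delta\sum_{k=1}^{d-1}(F_u(\theta_k)-F_v(\theta_k))^2$, $\ell^\Theta_{\mathrm C,\infty}(p,q):=\max_i\ell^\Theta_{\mathrm C}(p_i,q_i)$. *)

theory Defs
  imports "HOL-Probability.Probability"
begin

definition atom :: "real \<Rightarrow> real \<Rightarrow> nat \<Rightarrow> real" where
  "atom th1 Dl k = th1 + real (k - 1) * Dl"

definition prob_simplex :: "nat \<Rightarrow> (nat \<Rightarrow> real) set" where
  "prob_simplex d = {u. (\<forall>k\<in>{1..d}. 0 \<le> u k) \<and> (\<Sum>k=1..d. u k) = 1}"

text \<open>Coefficient vector of the categorical projection of the Dirac mass at x:
  Pi(delta_x) = sum_l cat_coef x l * delta_{theta_l}.\<close>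
definition cat_coef :: "real \<Rightarrow> real \<Rightarrow> nat \<Rightarrow> real \<Rightarrow> nat \<Rightarrow> real" where
  "cat_coef th1 Dl d x l =
     (if x \<le> atom th1 Dl 1 then (if l = 1 then 1 else 0)
      else if x \<ge> atom th1 Dl d then (if l = d then 1 else 0)
      else (let k = nat \<lfloor>(x - th1) / Dl\<rfloor> + 1 in
            if l = k then (atom th1 Dl (k+1) - x) / Dl
            else if l = k + 1 then (x - atom th1 Dl k) / Dl
            else 0))"

text \<open>The categorical distributional Bellman-type operator G_g, obtained by extending
  the projection linearly to the law sum_j P_ij (Law(R_ij - g) * eta^{p_j,0}),
  where R i j is the (finitely supported) law of the reward R_ij.\<close>
definition G_op :: "real \<Rightarrow> real \<Rightarrow> nat \<Rightarrow> ('s::finite \<Rightarrow> 's \<Rightarrow> real) \<Rightarrow> ('s \<Rightarrow> 's \<Rightarrow> real pmf)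
     \<Rightarrow> real \<Rightarrow> ('s \<Rightarrow> nat \<Rightarrow> real) \<Rightarrow> 's \<Rightarrow> nat \<Rightarrow> real" where
  "G_op th1 Dl d P R g p i l =
     (\<Sum>j\<in>UNIV. P i j * (\<Sum>r\<in>set_pmf (R i j). pmf (R i j) r *
        (\<Sum>k=1..d. p j k * cat_coef th1 Dl d (r - g + atom th1 Dl k) l)))"

definition cdf_vec :: "(nat \<Rightarrow> real) \<Rightarrow> nat \<Rightarrow> real" where
  "cdf_vec u k = (\<Sum>j=1..k. u j)"

definition cramer :: "real \<Rightarrow> nat \<Rightarrow> (nat \<Rightarrow> real) \<Rightarrow> (nat \<Rightarrow> real) \<Rightarrow> real" where
  "cramer Dl d u v = sqrt (Dl * (\<Sum>k=1..d-1. (cdf_vec u k - cdf_vec v k)^2))"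

definition cramer_inf :: "real \<Rightarrow> nat \<Rightarrow> ('s::finite \<Rightarrow> nat \<Rightarrow> real) \<Rightarrow> ('s \<Rightarrow> nat \<Rightarrow> real) \<Rightarrow> real" where
  "cramer_inf Dl d p q = Max (range (\<lambda>i. cramer Dl d (p i) (q i)))"

end

theory Submission
  imports Defs
begin

lemma wcs:
  fixes w x :: "'a \<Rightarrow> real"
  assumes "\<And>a. a \<in> A \<Longrightarrow> w a \<ge> 0"
  shows "(\<Sum>a\<in>A. w a * x a)\<^sup>2 \<le> (\<Sum>a\<in>A. w a) * (\<Sum>a\<in>A. w a * (x a)\<^sup>2)"
proof -
  have "(\<Sum>a\<in>A. sqrt (w a) * (sqrt (w a) * x a))\<^sup>2 \<le> (\<Sum>a\<in>A. (sqrt (w a))\<^sup>2) * (\<Sum>a\<in>A. (sqrt (w a) * x a)\<^sup>2)"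
    by (rule Cauchy_Schwarz_ineq_sum)
  moreover have "(\<Sum>a\<in>A. sqrt (w a) * (sqrt (w a) * x a)) = (\<Sum>a\<in>A. w a * x a)"
    by (rule sum.cong) (use assms in \<open>auto simp: mult.assoc[symmetric]\<close>)
  moreover have "(\<Sum>a\<in>A. (sqrt (w a))\<^sup>2) = (\<Sum>a\<in>A. w a)"
    by (rule sum.cong) (use assms in auto)
  moreover have "(\<Sum>a\<in>A. (sqrt (w a) * x a)\<^sup>2) = (\<Sum>a\<in>A. w a * (x a)\<^sup>2)"
    by (rule sum.cong) (use assms in \<open>auto simp: power_mult_distrib\<close>)
  ultimately show ?thesis by simp
qed

lemma jensen1:
  fixes w x :: "'a \<Rightarrow> real"
  assumes "\<And>a. a \<in> A \<Longrightarrow> w a \<ge> 0" "(\<Sum>a\<in>A. w a) \<le> 1"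
  shows "(\<Sum>a\<in>A. w a * x a)\<^sup>2 \<le> (\<Sum>a\<in>A. w a * (x a)\<^sup>2)"
proof -
  have "0 \<le> (\<Sum>a\<in>A. w a * (x a)\<^sup>2)" using assms(1) by (intro sum_nonneg) auto
  then have "(\<Sum>a\<in>A. w a) * (\<Sum>a\<in>A. w a * (x a)\<^sup>2) \<le> (\<Sum>a\<in>A. w a * (x a)\<^sup>2)"
    using assms(2) by (simp add: mult_left_le_one_le sum_nonneg assms(1))
  with wcs[of A w x] assms(1) show ?thesis by (meson order_trans)
qed

lemma schur:
  fixes w :: "'k \<Rightarrow> 'm \<Rightarrow> real" and D :: "'m \<Rightarrow> real"
  assumes "finite K" "finite M"
    and "\<And>k m. k \<in> K \<Longrightarrow> m \<in> M \<Longrightarrow> w k m \<ge> 0"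
    and "\<And>k. k \<in> K \<Longrightarrow> (\<Sum>m\<in>M. w k m) \<le> 1"
    and "\<And>m. m \<in> M \<Longrightarrow> (\<Sum>k\<in>K. w k m) \<le> 1"
  shows "(\<Sum>k\<in>K. (\<Sum>m\<in>M. w k m * D m)\<^sup>2) \<le> (\<Sum>m\<in>M. (D m)\<^sup>2)"
proof -
  have "(\<Sum>k\<in>K. (\<Sum>m\<in>M. w k m * D m)\<^sup>2) \<le> (\<Sum>k\<in>K. \<Sum>m\<in>M. w k m * (D m)\<^sup>2)"
    by (intro sum_mono jensen1) (use assms in auto)
  also have "\<dots> = (\<Sum>m\<in>M. (\<Sum>k\<in>K. w k m) * (D m)\<^sup>2)"
    by (subst sum.swap) (simp add: sum_distrib_right)
  also have "\<dots> \<le> (\<Sum>m\<in>M. 1 * (D m)\<^sup>2)"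
    by (intro sum_mono mult_right_mono) (use assms in auto)
  finally show ?thesis by simp
qed

definition c01 :: "real \<Rightarrow> real" where "c01 z = max 0 (min 1 z)"

definition hk :: "real \<Rightarrow> real \<Rightarrow> nat \<Rightarrow> real \<Rightarrow> real" where
  "hk th1 Dl k y = c01 ((atom th1 Dl (k+1) - y) / Dl)"

lemma hk_alt: "Dl > 0 \<Longrightarrow> hk th1 Dl k y = c01 (real k - (y - th1) / Dl)"
proof -
  assume "Dl > 0"
  then have "(atom th1 Dl (k+1) - y) / Dl = real k - (y - th1) / Dl"
    unfolding atom_def by (simp add: field_simps)
  then show ?thesis unfolding hk_def by simp
qed

lemma Hsum: "(\<Sum>k=1..n. c01 (real k - u)) = max 0 (min (real n) (real n - u))"
  by (induction n) (auto simp: c01_def max_def min_def)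


lemma c01_mono: "a \<le> b \<Longrightarrow> c01 a \<le> c01 b" by (auto simp: c01_def)
lemma c01_lip: "\<bar>c01 a - c01 b\<bar> \<le> \<bar>a - b\<bar>" by (auto simp: c01_def)
lemma c01_01: "0 \<le> c01 a" "c01 a \<le> 1" by (auto simp: c01_def)

lemma sqsum_le_aux:
  assumes "u \<le> u'"
  shows "(\<Sum>k=1..n. (c01 (real k - u) - c01 (real k - u'))\<^sup>2) \<le> (u - u')\<^sup>2"
proof -
  let ?x = "\<lambda>k. c01 (real k - u) - c01 (real k - u')"
  have x0: "0 \<le> ?x k" for k using c01_mono[of "real k - u'" "real k - u"] assms by simp
  have x1: "?x k \<le> u' - u" for k using c01_lip[of "real k - u" "real k - u'"] assms by simp
  have "(\<Sum>k=1..n. (?x k)\<^sup>2) \<le> (\<Sum>k=1..n. ?x k * (u' - u))"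
    unfolding power2_eq_square by (intro sum_mono mult_left_mono) (use x0 x1 in auto)
  also have "\<dots> = (\<Sum>k=1..n. ?x k) * (u' - u)" by (simp add: sum_distrib_right)
  also have "(\<Sum>k=1..n. ?x k) = max 0 (min (real n) (real n - u)) - max 0 (min (real n) (real n - u'))"
    by (simp only: sum_subtractf Hsum)
  also have "\<dots> \<le> u' - u" using assms by (auto simp: max_def min_def)
  finally show ?thesis
    using assms by (smt (verit, ccfv_threshold) mult_right_mono power2_eq_square power2_commute)
qed

lemma sqsum_le:
  "(\<Sum>k=1..n. (c01 (real k - u) - c01 (real k - u'))\<^sup>2) \<le> (u - u')\<^sup>2"
proof (cases "u \<le> u'")
  case True then show ?thesis by (rule sqsum_le_aux)
next
  case False
  then have "(\<Sum>k=1..n. (c01 (real k - u') - c01 (real k - u))\<^sup>2) \<le> (u' - u)\<^sup>2"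
    by (intro sqsum_le_aux) auto
  then show ?thesis by (simp add: power2_commute)
qed

lemma colsum_le:
  "(\<Sum>k=1..n. (c01 (real k - u) - c01 (real k - (u + 1)))) \<le> 1"
  unfolding sum_subtractf Hsum by (auto simp: max_def min_def)

lemma abel:
  fixes c f :: "nat \<Rightarrow> real"
  shows "(\<Sum>m=1..n. c m * f m) = (\<Sum>m=1..n-1. (\<Sum>l=1..m. c l) * (f m - f (Suc m))) + (\<Sum>l=1..n. c l) * f n"
proof (induction n)
  case 0 then show ?case by simp
next
  case (Suc n)
  show ?case
  proof (cases n)
    case 0 then show ?thesis by simp
  next
    case (Suc n')
    have "{1..Suc n - 1} = insert n {1..n-1}" using Suc by auto
    then have "(\<Sum>m=1..Suc n-1. (\<Sum>l=1..m. c l) * (f m - f (Suc m))) =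
       (\<Sum>l=1..n. c l) * (f n - f (Suc n)) + (\<Sum>m=1..n-1. (\<Sum>l=1..m. c l) * (f m - f (Suc m)))"
      using Suc by simp
    then show ?thesis using Suc.IH by (simp add: algebra_simps)
  qed
qed

lemma sum_two:
  fixes A B :: real
  assumes "finite S"
  shows "(\<Sum>l\<in>S. if l = m then A else if l = Suc m then B else 0) =
         (if m \<in> S then A else 0) + (if Suc m \<in> S then B else 0)"
proof -
  have "(\<Sum>l\<in>S. if l = m then A else if l = Suc m then B else 0) =
        (\<Sum>l\<in>S. (if l = m then A else 0) + (if l = Suc m then B else 0))"
    by (rule sum.cong) auto
  also have "\<dots> = (if m \<in> S then A else 0) + (if Suc m \<in> S then B else 0)"
    using assms by (simp add: sum.distrib)
  finally show ?thesis .
qed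

lemma cat_cdf:
  assumes Dl: "Dl > 0" and k: "1 \<le> k" "k < d"
  shows "(\<Sum>l=1..k. cat_coef th1 Dl d x l) = hk th1 Dl k x"
proof -
  define t where "t = (x - th1) / Dl"
  have hk: "hk th1 Dl k x = c01 (real k - t)" using hk_alt[OF Dl] t_def by simp
  have a1: "atom th1 Dl 1 = th1" by (simp add: atom_def)
  have ad: "atom th1 Dl d = th1 + real (d - 1) * Dl" by (simp add: atom_def)
  show ?thesis
  proof (cases "x \<le> th1")
    case True
    then have t0: "t \<le> 0" using Dl by (simp add: t_def divide_nonpos_pos)
    have "(\<Sum>l=1..k. cat_coef th1 Dl d x l) = (\<Sum>l=1..k. if l = 1 then 1 else 0)"
      by (rule sum.cong) (use True a1 in \<open>auto simp: cat_coef_def\<close>)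
    also have "\<dots> = 1" using k by simp
    finally show ?thesis using hk t0 k by (simp add: c01_def)
  next
    case False
    note nx = False
    show ?thesis
    proof (cases "x \<ge> atom th1 Dl d")
      case True
      have "t \<ge> real (d - 1)" using True Dl unfolding ad t_def by (simp add: field_simps)
      then have tk: "t \<ge> real k" using k by linarith
      have "(\<Sum>l=1..k. cat_coef th1 Dl d x l) = (\<Sum>l=1..k. 0)"
        by (rule sum.cong) (use True nx a1 k in \<open>auto simp: cat_coef_def\<close>)
      then show ?thesis using hk tk by (simp add: c01_def)
    next
      case False
      have t0: "t > 0" using nx Dl by (simp add: t_def)
      have td: "t < real (d - 1)" using False Dl unfolding ad t_def by (simp add: field_simps)
      define m where "m = nat \<lfloor>(x - th1) / Dl\<rfloor> + 1"
      have fl: "real m - 1 \<le> t" "t < real m" "m \<ge> 1"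
        using t0 unfolding m_def t_def[symmetric] by (auto simp: of_nat_nat) linarith+
      have A: "(atom th1 Dl (m+1) - x) / Dl = real m - t"
        unfolding atom_def t_def using Dl by (simp add: field_simps)
      have B: "(x - atom th1 Dl m) / Dl = t - (real m - 1)"
        unfolding atom_def t_def using Dl fl(3) by (simp add: field_simps of_nat_diff)
      have "(\<Sum>l=1..k. cat_coef th1 Dl d x l) =
            (\<Sum>l\<in>{1..k}. if l = m then real m - t else if l = Suc m then t - (real m - 1) else 0)"
        by (rule sum.cong) (use nx False a1 A B in \<open>auto simp: cat_coef_def m_def Let_def\<close>)
      also have "\<dots> = (if m \<in> {1..k} then real m - t else 0) + (if Suc m \<in> {1..k} then t - (real m - 1) else 0)"
        by (rule sum_two) simp
      also have "\<dots> = c01 (real k - t)"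
      proof -
        consider "k < m" | "k = m" | "k > m" by linarith
        then show ?thesis
        proof cases
          case 1
          then have "real k \<le> real m - 1" by linarith
          then show ?thesis using 1 fl by (auto simp: c01_def)
        next
          case 2 then show ?thesis using fl by (auto simp: c01_def)
        next
          case 3
          then have "real k \<ge> real m + 1" by linarith
          then show ?thesis using 3 fl by (auto simp: c01_def)
        qed
      qed
      finally show ?thesis using hk by simp
    qed
  qed
qed

lemma tele: "(\<Sum>m=1..n. (f m - f (Suc m))::real) = f 1 - f (Suc n)"
  by (induction n) auto

lemma hk_anti: "Dl > 0 \<Longrightarrow> y \<le> y' \<Longrightarrow> hk th1 Dl k y' \<le> hk th1 Dl k y"
  unfolding hk_def by (intro c01_mono divide_right_mono) auto

lemma atom_Suc: "m \<ge> 1 \<Longrightarrow> atom th1 Dl (Suc m) = atom th1 Dl m + Dl"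
  unfolding atom_def by (cases m) (auto simp: algebra_simps)

lemma lemB:
  assumes Dl: "Dl > 0" and pd: "p \<in> prob_simplex d" and qd: "q \<in> prob_simplex d"
  shows "(\<Sum>k=1..d-1. (\<Sum>m=1..d. (p m - q m) * hk th1 Dl k (s + atom th1 Dl m))\<^sup>2)
         \<le> (\<Sum>k=1..d-1. (cdf_vec p k - cdf_vec q k)\<^sup>2)"
proof -
  define D where "D m = cdf_vec p m - cdf_vec q m" for m
  define w where "w k m = hk th1 Dl k (s + atom th1 Dl m) - hk th1 Dl k (s + atom th1 Dl (Suc m))" for k m
  have Dd: "D d = 0" using pd qd unfolding D_def cdf_vec_def prob_simplex_def by simp
  have Dsum: "(\<Sum>l=1..m. p l - q l) = D m" for m unfolding D_def cdf_vec_def by (simp add: sum_subtractf)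
  have inner: "(\<Sum>m=1..d. (p m - q m) * hk th1 Dl k (s + atom th1 Dl m)) = (\<Sum>m\<in>{1..d-1}. w k m * D m)" for k
    using abel[of "\<lambda>m. p m - q m" "\<lambda>m. hk th1 Dl k (s + atom th1 Dl m)" d]
    unfolding Dsum Dd w_def by (simp add: mult.commute)
  have "(\<Sum>k\<in>{1..d-1}. (\<Sum>m\<in>{1..d-1}. w k m * D m)\<^sup>2) \<le> (\<Sum>m\<in>{1..d-1}. (D m)\<^sup>2)"
  proof (rule schur)
    fix k m assume "m \<in> {1..d-1}"
    then show "0 \<le> w k m" unfolding w_def using hk_anti[OF Dl] atom_Suc[of m th1 Dl] Dl by simp
  next
    fix k
    have "(\<Sum>m\<in>{1..d-1}. w k m) = hk th1 Dl k (s + atom th1 Dl 1) - hk th1 Dl k (s + atom th1 Dl (Suc (d-1)))"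
      unfolding w_def by (rule tele)
    then show "(\<Sum>m\<in>{1..d-1}. w k m) \<le> 1"
      unfolding hk_def using c01_01 by (smt (verit))
  next
    fix m assume m: "m \<in> {1..d-1}"
    define u where "u = (s + atom th1 Dl m - th1) / Dl"
    have u1: "(s + atom th1 Dl (Suc m) - th1) / Dl = u + 1"
      using m Dl atom_Suc[of m th1 Dl] unfolding u_def by (simp add: field_simps)
    have "(\<Sum>k\<in>{1..d-1}. w k m) = (\<Sum>k=1..d-1. (c01 (real k - u) - c01 (real k - (u + 1))))"
      unfolding w_def hk_alt[OF Dl] u_def[symmetric] u1 by simp
    then show "(\<Sum>k\<in>{1..d-1}. w k m) \<le> 1" using colsum_le by simp
  qed auto
  then show ?thesis unfolding inner D_def .
qed

lemma mix1:
  fixes w :: "'a \<Rightarrow> real" and X :: "'a \<Rightarrow> 'k \<Rightarrow> real"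
  assumes "finite A" "\<And>a. a \<in> A \<Longrightarrow> w a \<ge> 0" "(\<Sum>a\<in>A. w a) = 1"
    and "\<And>a. a \<in> A \<Longrightarrow> (\<Sum>k\<in>K. (X a k)\<^sup>2) \<le> C"
  shows "(\<Sum>k\<in>K. (\<Sum>a\<in>A. w a * X a k)\<^sup>2) \<le> C"
proof -
  have "(\<Sum>k\<in>K. (\<Sum>a\<in>A. w a * X a k)\<^sup>2) \<le> (\<Sum>k\<in>K. \<Sum>a\<in>A. w a * (X a k)\<^sup>2)"
    by (intro sum_mono jensen1) (use assms in auto)
  also have "\<dots> = (\<Sum>a\<in>A. w a * (\<Sum>k\<in>K. (X a k)\<^sup>2))"
    by (subst sum.swap) (simp add: sum_distrib_left)
  also have "\<dots> \<le> (\<Sum>a\<in>A. w a * C)"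
    by (intro sum_mono mult_left_mono) (use assms in auto)
  also have "\<dots> = C" using assms(3) by (simp add: sum_distrib_right[symmetric])
  finally show ?thesis .
qed

lemma mix2:
  fixes W :: "'j::finite \<Rightarrow> real" and R :: "'j \<Rightarrow> real pmf" and X :: "'j \<Rightarrow> real \<Rightarrow> 'k \<Rightarrow> real"
  assumes "\<And>j. W j \<ge> 0" "(\<Sum>j\<in>UNIV. W j) = 1" "\<And>j. finite (set_pmf (R j))"
    and "\<And>j r. r \<in> set_pmf (R j) \<Longrightarrow> (\<Sum>k\<in>K. (X j r k)\<^sup>2) \<le> C"
  shows "(\<Sum>k\<in>K. (\<Sum>j\<in>UNIV. W j * (\<Sum>r\<in>set_pmf (R j). pmf (R j) r * X j r k))\<^sup>2) \<le> C"
proof (rule mix1[where X = "\<lambda>j k. \<Sum>r\<in>set_pmf (R j). pmf (R j) r * X j r k"])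
  fix j
  show "(\<Sum>k\<in>K. (\<Sum>r\<in>set_pmf (R j). pmf (R j) r * X j r k)\<^sup>2) \<le> C"
    by (rule mix1) (use assms sum_pmf_eq_1[of "set_pmf (R j)" "R j"] in auto)
qed (use assms in auto)

lemma swapm: "(\<Sum>l\<in>L. \<Sum>j\<in>J. (c j :: real) * Y j l) = (\<Sum>j\<in>J. c j * (\<Sum>l\<in>L. Y j l))"
  by (simp add: sum_distrib_left) (rule sum.swap)

lemma cdfG:
  assumes Dl: "Dl > 0" and k: "k \<in> {1..d-1}"
  shows "cdf_vec (G_op th1 Dl d P R g p i) k =
    (\<Sum>j\<in>UNIV. P i j * (\<Sum>r\<in>set_pmf (R i j). pmf (R i j) r *
        (\<Sum>m=1..d. p j m * hk th1 Dl k (r - g + atom th1 Dl m))))"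
proof -
  have c: "(\<Sum>l=1..k. cat_coef th1 Dl d x l) = hk th1 Dl k x" for x
    using cat_cdf[OF Dl] k by auto
  show ?thesis
    unfolding cdf_vec_def G_op_def swapm c ..
qed

lemma diff3:
  fixes P :: "'j::finite \<Rightarrow> real"
  shows "(\<Sum>j\<in>UNIV. P j * (\<Sum>r\<in>S j. \<pi> j r * A j r)) - (\<Sum>j\<in>UNIV. P j * (\<Sum>r\<in>S j. \<pi> j r * B j r))
     = (\<Sum>j\<in>UNIV. P j * (\<Sum>r\<in>S j. \<pi> j r * (A j r - B j r)))"
  by (simp add: right_diff_distrib sum_subtractf)

theorem lemma7:
  fixes th1 Dl :: real and d :: nat
    and P :: "'s::finite \<Rightarrow> 's \<Rightarrow> real" and R :: "'s \<Rightarrow> 's \<Rightarrow> real pmf"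
    and g g' :: real and p q :: "'s \<Rightarrow> nat \<Rightarrow> real"
  assumes Dl_pos: "Dl > 0"
    and P_nonneg: "\<And>i j. P i j \<ge> 0"
    and P_stoch: "\<And>i. (\<Sum>j\<in>UNIV. P i j) = 1"
    and R_fin: "\<And>i j. finite (set_pmf (R i j))"
    and R_range: "\<And>i j. set_pmf (R i j) \<subseteq> {0..1}"
    and p_simp: "\<And>i. p i \<in> prob_simplex d"
    and q_simp: "\<And>i. q i \<in> prob_simplex d"
  shows "cramer_inf Dl d (G_op th1 Dl d P R g p) (G_op th1 Dl d P R g' q)
           \<le> cramer_inf Dl d p q + \<bar>g - g'\<bar> / sqrt Dl"
proof -
  define ci where "ci = cramer_inf Dl d p q"
  define K where "K = {1..d-1}"
  define SS where "SS j = (\<Sum>k\<in>K. (cdf_vec (p j) k - cdf_vec (q j) k)\<^sup>2)" for j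
  define L where "L = \<bar>g - g'\<bar> / Dl"
  have SS0: "SS j \<ge> 0" for j unfolding SS_def by (simp add: sum_nonneg)
  have cj: "cramer Dl d (p j) (q j) \<le> ci" for j
    unfolding ci_def cramer_inf_def apply (rule Max_ge) apply simp by (rule rangeI)
  have "0 \<le> cramer Dl d (p j) (q j)" for j
    unfolding cramer_def using Dl_pos by (simp add: sum_nonneg)
  then have ci0: "0 \<le> ci" using cj[of undefined] by (meson order_trans)
  have SSb: "SS j \<le> ci\<^sup>2 / Dl" for j
  proof -
    have "sqrt (Dl * SS j) \<le> ci" using cj[of j] unfolding cramer_def SS_def K_def .
    then have "(sqrt (Dl * SS j))\<^sup>2 \<le> ci\<^sup>2" using SS0[of j] Dl_pos by (intro power_mono) auto
    then have "Dl * SS j \<le> ci\<^sup>2" using SS0[of j] Dl_pos by simp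
    then show ?thesis using Dl_pos by (simp add: field_simps)
  qed
  have main: "cramer Dl d (G_op th1 Dl d P R g p i) (G_op th1 Dl d P R g' q i) \<le> ci + \<bar>g - g'\<bar> / sqrt Dl" for i
  proof -
    define X where "X j r k = (\<Sum>m=1..d. p j m * hk th1 Dl k (r - g + atom th1 Dl m))
        - (\<Sum>m=1..d. q j m * hk th1 Dl k (r - g + atom th1 Dl m))" for j r k
    define Y where "Y j r k = (\<Sum>m=1..d. q j m * hk th1 Dl k (r - g + atom th1 Dl m))
        - (\<Sum>m=1..d. q j m * hk th1 Dl k (r - g' + atom th1 Dl m))" for j r k
    define a where "a k = (\<Sum>j\<in>UNIV. P i j * (\<Sum>r\<in>set_pmf (R i j). pmf (R i j) r * X j r k))" for k
    define b where "b k = (\<Sum>j\<in>UNIV. P i j * (\<Sum>r\<in>set_pmf (R i j). pmf (R i j) r * Y j r k))" for k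
    have ab: "cdf_vec (G_op th1 Dl d P R g p i) k - cdf_vec (G_op th1 Dl d P R g' q i) k = a k + b k"
      if "k \<in> K" for k
    proof -
      have k: "k \<in> {1..d-1}" using that K_def by simp
      have "cdf_vec (G_op th1 Dl d P R g p i) k - cdf_vec (G_op th1 Dl d P R g q i) k = a k"
        unfolding cdfG[OF Dl_pos k] a_def X_def by (rule diff3)
      moreover have "cdf_vec (G_op th1 Dl d P R g q i) k - cdf_vec (G_op th1 Dl d P R g' q i) k = b k"
        unfolding cdfG[OF Dl_pos k] b_def Y_def by (rule diff3)
      ultimately show ?thesis by linarith
    qed
    have asum: "(\<Sum>k\<in>K. (a k)\<^sup>2) \<le> ci\<^sup>2 / Dl"
      unfolding a_def
    proof (rule mix2)
      fix j r
      have "(\<Sum>k\<in>K. (X j r k)\<^sup>2) \<le> SS j"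
        unfolding X_def SS_def K_def
        using lemB[OF Dl_pos p_simp q_simp, where s = "r - g" and ?th1.0 = th1]
        by (simp only: left_diff_distrib sum_subtractf)
      then show "(\<Sum>k\<in>K. (X j r k)\<^sup>2) \<le> ci\<^sup>2 / Dl" using SSb[of j] by linarith
    qed (use P_nonneg P_stoch R_fin in auto)
    have bsum: "(\<Sum>k\<in>K. (b k)\<^sup>2) \<le> L\<^sup>2"
      unfolding b_def
    proof (rule mix2)
      fix j r
      have qs: "\<And>m. m \<in> {1..d} \<Longrightarrow> 0 \<le> q j m" "(\<Sum>m=1..d. q j m) = 1"
        using q_simp[of j] unfolding prob_simplex_def by blast+
      have Yq: "Y j r k = (\<Sum>m=1..d. q j m * (hk th1 Dl k (r - g + atom th1 Dl m) - hk th1 Dl k (r - g' + atom th1 Dl m)))" for k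
        unfolding Y_def by (simp only: right_diff_distrib sum_subtractf)
      show "(\<Sum>k\<in>K. (Y j r k)\<^sup>2) \<le> L\<^sup>2"
        unfolding Yq
      proof (rule mix1)
        fix m
        define u where "u = (r - g + atom th1 Dl m - th1) / Dl"
        define u' where "u' = (r - g' + atom th1 Dl m - th1) / Dl"
        have "(u - u')\<^sup>2 = L\<^sup>2" unfolding L_def
        proof -
          have "u - u' = (g' - g) / Dl" unfolding u_def u'_def using Dl_pos by (simp add: field_simps)
          then show "(u - u')\<^sup>2 = (\<bar>g - g'\<bar> / Dl)\<^sup>2" by (simp add: power_divide power2_commute)
        qed
        then show "(\<Sum>k\<in>K. (hk th1 Dl k (r - g + atom th1 Dl m) - hk th1 Dl k (r - g' + atom th1 Dl m))\<^sup>2) \<le> L\<^sup>2"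
          unfolding K_def hk_alt[OF Dl_pos] u_def[symmetric] u'_def[symmetric]
          using sqsum_le[of u u' "d-1"] by simp
      qed (use qs in auto)
    qed (use P_nonneg P_stoch R_fin in auto)
    have e1: "cramer Dl d (G_op th1 Dl d P R g p i) (G_op th1 Dl d P R g' q i) = sqrt Dl * L2_set (\<lambda>k. a k + b k) K"
      unfolding cramer_def L2_set_def K_def using ab[unfolded K_def]
      by (simp add: real_sqrt_mult)
    have e2: "L2_set (\<lambda>k. a k + b k) K \<le> L2_set a K + L2_set b K"
      by (rule L2_set_triangle_ineq)
    have ta: "L2_set a K \<le> sqrt (ci\<^sup>2 / Dl)" unfolding L2_set_def using asum by (rule real_sqrt_le_mono)
    have tb: "L2_set b K \<le> sqrt (L\<^sup>2)" unfolding L2_set_def using bsum by (rule real_sqrt_le_mono)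
    have e3: "sqrt Dl * (sqrt (ci\<^sup>2 / Dl) + sqrt (L\<^sup>2)) = ci + \<bar>g - g'\<bar> / sqrt Dl"
    proof -
      have "sqrt Dl * sqrt (ci\<^sup>2 / Dl) = ci" using Dl_pos ci0
        by (simp add: real_sqrt_divide)
      moreover have "sqrt Dl * sqrt (L\<^sup>2) = \<bar>g - g'\<bar> / sqrt Dl" 
      proof -
        have "sqrt (L\<^sup>2) = \<bar>g - g'\<bar> / Dl" unfolding L_def using Dl_pos by simp
        moreover have "sqrt Dl * (\<bar>g - g'\<bar> / Dl) = \<bar>g - g'\<bar> / sqrt Dl"
        proof -
          have sp: "sqrt Dl > 0" using Dl_pos by simp
          have "Dl = sqrt Dl * sqrt Dl" using Dl_pos by simp
          then have "sqrt Dl * (\<bar>g - g'\<bar> / Dl) = sqrt Dl * (\<bar>g - g'\<bar> / (sqrt Dl * sqrt Dl))" by simp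
          also have "\<dots> = \<bar>g - g'\<bar> / sqrt Dl" using sp by (simp add: field_simps)
          finally show ?thesis .
        qed
        ultimately show ?thesis by simp
      qed
      ultimately show ?thesis by (simp add: distrib_left)
    qed
    have "sqrt Dl * L2_set (\<lambda>k. a k + b k) K \<le> sqrt Dl * (sqrt (ci\<^sup>2 / Dl) + sqrt (L\<^sup>2))"
      using Dl_pos e2 ta tb by (intro mult_left_mono) auto
    then show ?thesis using e1 e3 by simp
  qed
  show ?thesis
    unfolding cramer_inf_def[of Dl d "G_op th1 Dl d P R g p"] ci_def[symmetric]
    apply (rule Max.boundedI)
      apply simp
     apply simp
    using main by blast
qed

end
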